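(* Let $H$ be a finite $p$-group with center $Z(H)$ and let $A$ be a maximal abelian subgroup of $H$. Then $m_{\mathsf{faithful}}(H)\le m_{\mathsf{faithful}}(Z(H))\,[H:A]$.
   Context: For a finite group $G$, $m_{\mathsf{faithful}}(G)$ denotes the smallest dimension of a faithful complex representation of $G$. *)

theory Defs
  imports "HOL-Algebra.Algebra" "Jordan_Normal_Form.Matrix"
begin

definition group_center :: "('a, 'b) monoid_scheme \<Rightarrow> 'a set" where
  "group_center G = {z \<in> carrier G. \<forall>g \<in> carrier G. z \<otimes>\<^bsub>G\<^esub> g = g \<otimes>\<^bsub>G\<^esub> z}"

(* A faithful complex representation of G of dimension n: a group homomorphism
   G \<rightarrow> GL_n(C) (n x n complex matrices; multiplicativity plus identity \<mapsto> identity
   forces invertibility) which is injective on the carrier. *)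
definition faithful_rep :: "('a, 'b) monoid_scheme \<Rightarrow> nat \<Rightarrow> ('a \<Rightarrow> complex mat) \<Rightarrow> bool" where
  "faithful_rep G n \<rho> \<longleftrightarrow>
     (\<forall>g \<in> carrier G. \<rho> g \<in> carrier_mat n n) \<and>
     (\<forall>g \<in> carrier G. \<forall>h \<in> carrier G. \<rho> (g \<otimes>\<^bsub>G\<^esub> h) = \<rho> g * \<rho> h) \<and>
     \<rho> \<one>\<^bsub>G\<^esub> = 1\<^sub>m n \<and>
     inj_on \<rho> (carrier G)"

definition m_faithful :: "('a, 'b) monoid_scheme \<Rightarrow> nat" where
  "m_faithful G = (LEAST n. \<exists>\<rho>. faithful_rep G n \<rho>)"

definition maximal_abelian_subgroup :: "'a set \<Rightarrow> ('a, 'b) monoid_scheme \<Rightarrow> bool" where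
  "maximal_abelian_subgroup A H \<longleftrightarrow>
     subgroup A H \<and> comm_group (H\<lparr>carrier := A\<rparr>) \<and>
     (\<forall>B. subgroup B H \<and> comm_group (H\<lparr>carrier := B\<rparr>) \<and> A \<subseteq> B \<longrightarrow> B = A)"

end

theory Submission
  imports Defs
begin


definition is_char :: "('a,'b) monoid_scheme \<Rightarrow> 'a set \<Rightarrow> ('a \<Rightarrow> complex) \<Rightarrow> bool" where
  "is_char G B \<chi> \<longleftrightarrow> \<chi> \<one>\<^bsub>G\<^esub> = 1 \<and> (\<forall>x\<in>B. \<forall>y\<in>B. \<chi> (x \<otimes>\<^bsub>G\<^esub> y) = \<chi> x * \<chi> y)"

context group begin

lemma sub_pow_closed:
  assumes "subgroup B G" "x \<in> B"
  shows "x [^] (k::nat) \<in> B"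
proof (induction k)
  case 0 then show ?case using subgroup.one_closed[OF assms(1)] by simp
next
  case (Suc k)
  have "x \<in> carrier G" using subgroup.mem_carrier[OF assms] .
  then have "x [^] Suc k = x [^] k \<otimes> x" by simp
  then show ?case using subgroup.m_closed[OF assms(1) Suc assms(2)] by simp
qed

lemma char_pow:
  assumes "subgroup B G" "is_char G B \<chi>" "x \<in> B"
  shows "\<chi> (x [^] (k::nat)) = \<chi> x ^ k"
proof (induction k)
  case 0 then show ?case using assms(2) unfolding is_char_def by simp
next
  case (Suc k)
  have xc: "x \<in> carrier G" using subgroup.mem_carrier[OF assms(1,3)] .
  have "x [^] k \<in> B" using sub_pow_closed[OF assms(1,3)] .
  then have "\<chi> (x [^] k \<otimes> x) = \<chi> (x [^] k) * \<chi> x"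
    using assms(2,3) unfolding is_char_def by simp
  then show ?case using Suc xc by simp
qed

lemma char_inv:
  assumes "subgroup B G" "is_char G B \<chi>" "x \<in> B"
  shows "\<chi> (inv x) * \<chi> x = 1"
proof -
  have xc: "x \<in> carrier G" using subgroup.mem_carrier[OF assms(1,3)] .
  have "inv x \<in> B" using subgroup.m_inv_closed[OF assms(1,3)] .
  then have "\<chi> (inv x \<otimes> x) = \<chi> (inv x) * \<chi> x" using assms(2,3) unfolding is_char_def by simp
  moreover have "inv x \<otimes> x = \<one>" using xc by simp
  ultimately show ?thesis using assms(2) unfolding is_char_def by simp
qed

lemma char_nonzero:
  assumes "subgroup B G" "is_char G B \<chi>" "x \<in> B"
  shows "\<chi> x \<noteq> 0"
  using char_inv[OF assms] by auto

end


lemma (in group) finite_closed_subgroup: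
  assumes fin: "finite (carrier G)" and S: "S \<subseteq> carrier G" "S \<noteq> {}"
    and cl: "\<And>x y. x \<in> S \<Longrightarrow> y \<in> S \<Longrightarrow> x \<otimes> y \<in> S"
  shows "subgroup S G"
proof -
  have pw: "x [^] Suc k \<in> S" if "x \<in> S" for x k
  proof (induction k)
    case 0 then show ?case using that S(1) by auto
  next
    case (Suc k)
    have xc: "x \<in> carrier G" using that S(1) by auto
    have "x [^] Suc (Suc k) = x [^] Suc k \<otimes> x" by simp
    then show ?case using cl[OF Suc that] by simp
  qed
  show ?thesis
  proof (rule subgroupI[OF S])
    fix x assume x: "x \<in> S"
    have xc: "x \<in> carrier G" using x S(1) by auto
    have o1: "ord x \<ge> 1" using ord_ge_1[OF fin xc] .
    have "x [^] (2 * ord x - 1) \<otimes> x = x [^] (2 * ord x - 1 + 1)"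
      using nat_pow_mult[OF xc, of "2 * ord x - 1" 1] xc by simp
    also have "2 * ord x - 1 + 1 = ord x * 2" using o1 by simp
    also have "x [^] (ord x * 2) = \<one>" using nat_pow_pow[OF xc, of "ord x" 2, symmetric] xc by simp
    finally have "inv x = x [^] (2 * ord x - 1)" using xc by (intro inv_equality) auto
    moreover have "2 * ord x - 1 = Suc (2 * ord x - 2)" using o1 by simp
    ultimately show "inv x \<in> S" using pw[OF x] by simp
  next
    fix x y assume "x \<in> S" "y \<in> S" then show "x \<otimes> y \<in> S" using cl by simp
  qed
qed

context comm_group begin

definition adj :: "'a set \<Rightarrow> 'a \<Rightarrow> 'a set" where
  "adj B a = {x. \<exists>b\<in>B. \<exists>i::nat. x = b \<otimes> a [^] i}"

lemma adj_subgroup: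
  assumes fin: "finite (carrier G)" and B: "subgroup B G" and a: "a \<in> carrier G"
  shows "subgroup (adj B a) G"
proof (rule finite_closed_subgroup[OF fin])
  have Bc: "\<And>b. b \<in> B \<Longrightarrow> b \<in> carrier G" using subgroup.mem_carrier[OF B] .
  show "adj B a \<subseteq> carrier G" unfolding adj_def using a Bc by auto
  have "\<one> = \<one> \<otimes> a [^] (0::nat)" by simp
  then have "\<one> \<in> adj B a" unfolding adj_def using subgroup.one_closed[OF B] by blast
  then show "adj B a \<noteq> {}" by auto
  fix x y assume "x \<in> adj B a" "y \<in> adj B a"
  then obtain b i b' j where b: "b \<in> B" "x = b \<otimes> a [^] (i::nat)" and b': "b' \<in> B" "y = b' \<otimes> a [^] (j::nat)"
    unfolding adj_def by auto
  have bc: "b \<in> carrier G" "b' \<in> carrier G" using Bc b(1) b'(1) by auto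
  have "x \<otimes> y = (b \<otimes> b') \<otimes> (a [^] i \<otimes> a [^] j)"
    using bc a by (simp add: b b' m_ac)
  also have "\<dots> = (b \<otimes> b') \<otimes> a [^] (i + j)" using nat_pow_mult[OF a] by simp
  finally show "x \<otimes> y \<in> adj B a" unfolding adj_def using subgroup.m_closed[OF B b(1) b'(1)] by blast
qed

lemma adj_sup: "subgroup B G \<Longrightarrow> a \<in> carrier G \<Longrightarrow> B \<subseteq> adj B a \<and> a \<in> adj B a"
proof -
  assume B: "subgroup B G" and a: "a \<in> carrier G"
  have "\<And>b. b \<in> B \<Longrightarrow> b = b \<otimes> a [^] (0::nat)" using subgroup.mem_carrier[OF B] by simp
  then have 1: "B \<subseteq> adj B a" unfolding adj_def by blast
  have "a = \<one> \<otimes> a [^] (1::nat)" using a by simp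
  then have "a \<in> adj B a" unfolding adj_def using subgroup.one_closed[OF B] by blast
  with 1 show ?thesis by simp
qed


lemma least_pow_in:
  assumes fin: "finite (carrier G)" and B: "subgroup B G" and a: "a \<in> carrier G"
  defines "n \<equiv> (LEAST n::nat. 0 < n \<and> a [^] n \<in> B)"
  shows "0 < n \<and> a [^] n \<in> B" and "\<And>k. a [^] k \<in> B \<Longrightarrow> n dvd k"
proof -
  have o1: "ord a \<ge> 1" using ord_ge_1[OF fin a] .
  have "0 < ord a \<and> a [^] ord a \<in> B" using o1 subgroup.one_closed[OF B] a by simp
  then show np: "0 < n \<and> a [^] n \<in> B" unfolding n_def by (rule LeastI[where P="\<lambda>n::nat. 0 < n \<and> a [^] n \<in> B"])
  fix k assume k: "a [^] (k::nat) \<in> B"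
  define q r where "q = k div n" and "r = k mod n"
  have kqr: "k = n * q + r" unfolding q_def r_def by simp
  have rn: "r < n" unfolding r_def using np by simp
  have "a [^] k = (a [^] n) [^] q \<otimes> a [^] r"
    using kqr nat_pow_pow[OF a] nat_pow_mult[OF a] by simp
  then have "a [^] r = inv ((a [^] n) [^] q) \<otimes> a [^] k"
    using a by (simp add: m_assoc[symmetric])
  moreover have "(a [^] n) [^] q \<in> B" using sub_pow_closed[OF B] np by simp
  ultimately have arB: "a [^] r \<in> B"
    using subgroup.m_closed[OF B] subgroup.m_inv_closed[OF B] k by simp
  have "r = 0"
  proof (rule ccontr)
    assume "r \<noteq> 0"
    then have "n \<le> r" unfolding n_def using arB by (intro Least_le) simp
    with rn show False by simp
  qed
  then show "n dvd k" using kqr by simp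
qed

lemma ext_wd:
  assumes fin: "finite (carrier G)" and B: "subgroup B G" and a: "a \<in> carrier G"
    and chi: "is_char G B \<chi>"
    and n_def: "n = (LEAST n::nat. 0 < n \<and> a [^] n \<in> B)" and c: "c ^ n = \<chi> (a [^] n)"
    and b: "b \<in> B" "b' \<in> B" and eq: "b \<otimes> a [^] (i::nat) = b' \<otimes> a [^] (j::nat)" and ij: "i \<le> j"
  shows "\<chi> b * c ^ i = \<chi> b' * c ^ j"
proof -
  have bc: "b \<in> carrier G" "b' \<in> carrier G" using subgroup.mem_carrier[OF B] b by auto
  have "a [^] j = a [^] (j - i) \<otimes> a [^] i" using nat_pow_mult[OF a] ij by simp
  then have "b \<otimes> a [^] i = (b' \<otimes> a [^] (j - i)) \<otimes> a [^] i" using eq bc a by (simp add: m_assoc)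
  then have bb: "b = b' \<otimes> a [^] (j - i)" using bc a r_cancel by (meson m_closed nat_pow_closed)
  then have "a [^] (j - i) = inv b' \<otimes> b" using bc a by (simp add: m_assoc[symmetric])
  then have inB: "a [^] (j - i) \<in> B" using subgroup.m_closed[OF B] subgroup.m_inv_closed[OF B] b by simp
  then obtain q where q: "j - i = n * q" using least_pow_in(2)[OF fin B a] n_def by blast
  have an: "a [^] n \<in> B" using least_pow_in(1)[OF fin B a] n_def by simp
  have "\<chi> b = \<chi> b' * \<chi> (a [^] (j - i))" using bb chi inB b unfolding is_char_def by simp
  also have "a [^] (j - i) = (a [^] n) [^] q" using q nat_pow_pow[OF a] by simp
  also have "\<chi> ((a [^] n) [^] q) = c ^ (n * q)" using char_pow[OF B chi an] c by (simp add: power_mult)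
  finally have "\<chi> b = \<chi> b' * c ^ (j - i)" using q by simp
  then have "\<chi> b * c ^ i = \<chi> b' * (c ^ (j - i) * c ^ i)" by simp
  also have "c ^ (j - i) * c ^ i = c ^ j" using ij by (simp add: power_add[symmetric])
  finally show ?thesis .
qed

lemma ext_step:
  assumes fin: "finite (carrier G)" and B: "subgroup B G" and a: "a \<in> carrier G"
    and chi: "is_char G B \<chi>"
    and n_def: "n = (LEAST n::nat. 0 < n \<and> a [^] n \<in> B)" and c: "c ^ n = \<chi> (a [^] n)"
  shows "\<exists>\<psi>. is_char G (adj B a) \<psi> \<and> (\<forall>b\<in>B. \<psi> b = \<chi> b) \<and> \<psi> a = c"
proof -
  have Bc: "\<And>b. b \<in> B \<Longrightarrow> b \<in> carrier G" using subgroup.mem_carrier[OF B] .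
  have wd: "\<chi> b * c ^ i = \<chi> b' * c ^ j"
    if "b \<in> B" "b' \<in> B" "b \<otimes> a [^] (i::nat) = b' \<otimes> a [^] (j::nat)" for b b' i j
  proof (cases "i \<le> j")
    case True then show ?thesis using ext_wd[OF fin B a chi n_def c that] by simp
  next
    case False then show ?thesis using ext_wd[OF fin B a chi n_def c that(2,1) that(3)[symmetric]] by simp
  qed
  define \<psi> where "\<psi> x = (SOME v. \<exists>b\<in>B. \<exists>i::nat. x = b \<otimes> a [^] i \<and> v = \<chi> b * c ^ i)" for x
  have psv: "\<psi> (b \<otimes> a [^] i) = \<chi> b * c ^ i" if "b \<in> B" for b i
  proof -
    let ?P = "\<lambda>v. \<exists>b'\<in>B. \<exists>j::nat. b \<otimes> a [^] i = b' \<otimes> a [^] j \<and> v = \<chi> b' * c ^ j"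
    have "?P (\<chi> b * c ^ i)" using that by blast
    then have "?P (\<psi> (b \<otimes> a [^] i))" unfolding \<psi>_def by (rule someI)
    then obtain b' j where "b' \<in> B" "b \<otimes> a [^] i = b' \<otimes> a [^] j" "\<psi> (b \<otimes> a [^] i) = \<chi> b' * c ^ j"
      by blast
    then show ?thesis using wd[OF that] by simp
  qed
  have one: "\<one> \<in> B" using subgroup.one_closed[OF B] .
  have chi1: "\<chi> \<one> = 1" using chi unfolding is_char_def by simp
  have "\<psi> \<one> = 1" using psv[OF one, of 0] chi1 by simp
  moreover have "\<psi> (x \<otimes> y) = \<psi> x * \<psi> y" if "x \<in> adj B a" "y \<in> adj B a" for x y
  proof -
    from that(1) obtain b i where b: "b \<in> B" "x = b \<otimes> a [^] (i::nat)"
      unfolding adj_def by auto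
    from that(2) obtain b' j where b': "b' \<in> B" "y = b' \<otimes> a [^] (j::nat)"
      unfolding adj_def by auto
    have bc: "b \<in> carrier G" "b' \<in> carrier G" using Bc b(1) b'(1) by auto
    have "x \<otimes> y = (b \<otimes> b') \<otimes> (a [^] i \<otimes> a [^] j)"
      using bc a by (simp add: b b' m_ac)
    also have "\<dots> = (b \<otimes> b') \<otimes> a [^] (i + j)" using nat_pow_mult[OF a] by simp
    finally have "\<psi> (x \<otimes> y) = \<chi> (b \<otimes> b') * c ^ (i + j)"
      using psv subgroup.m_closed[OF B b(1) b'(1)] by simp
    also have "\<dots> = (\<chi> b * c ^ i) * (\<chi> b' * c ^ j)"
      using chi b(1) b'(1) unfolding is_char_def by (simp add: power_add)
    finally show ?thesis using psv b b' by simp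
  qed
  ultimately have "is_char G (adj B a) \<psi>" unfolding is_char_def by blast
  moreover have "\<forall>b\<in>B. \<psi> b = \<chi> b" using psv[of _ 0] Bc by simp
  moreover have "\<psi> a = c" using psv[OF one, of 1] chi1 a by simp
  ultimately show ?thesis by blast
qed


lemma exists_nth_root:
  fixes w :: complex assumes "w \<noteq> 0" "0 < n"
  shows "\<exists>c. c ^ n = w"
proof -
  have "(1::complex) \<in> {z. z ^ n = 1}" by simp
  then have "{z::complex. z ^ n = w} \<noteq> {}"
    using bij_betw_nth_root_unity[OF assms] unfolding bij_betw_def by blast
  then show ?thesis by blast
qed

lemma char_extend_aux:
  assumes fin: "finite (carrier G)"
  shows "\<forall>B \<chi>. card (carrier G - B) = m \<longrightarrow> subgroup B G \<longrightarrow> is_char G B \<chi> \<longrightarrow>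
           (\<exists>\<psi>. is_char G (carrier G) \<psi> \<and> (\<forall>b\<in>B. \<psi> b = \<chi> b))"
proof (induction m rule: less_induct)
  case (less m)
  show ?case
  proof (intro allI impI)
    fix B \<chi> assume m: "card (carrier G - B) = m" and B: "subgroup B G" and chi: "is_char G B \<chi>"
    show "\<exists>\<psi>. is_char G (carrier G) \<psi> \<and> (\<forall>b\<in>B. \<psi> b = \<chi> b)"
    proof (cases "carrier G - B = {}")
      case True
      then have "B = carrier G" using subgroup.subset[OF B] by auto
      then show ?thesis using chi by auto
    next
      case False
      then obtain a where a: "a \<in> carrier G" "a \<notin> B" by auto
      define n where "n = (LEAST n::nat. 0 < n \<and> a [^] n \<in> B)"
      have np: "0 < n \<and> a [^] n \<in> B" using least_pow_in(1)[OF fin B a(1)] unfolding n_def .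
      have "\<chi> (a [^] n) \<noteq> 0" using char_nonzero[OF B chi] np by simp
      then obtain c where c: "c ^ n = \<chi> (a [^] n)" using exists_nth_root np by blast
      obtain \<psi> where psi: "is_char G (adj B a) \<psi>" "\<forall>b\<in>B. \<psi> b = \<chi> b"
        using ext_step[OF fin B a(1) chi n_def c] by blast
      have B': "subgroup (adj B a) G" using adj_subgroup[OF fin B a(1)] .
      have sup: "B \<subseteq> adj B a" "a \<in> adj B a" using adj_sup[OF B a(1)] by auto
      have "carrier G - adj B a \<subset> carrier G - B" using sup a by blast
      then have "card (carrier G - adj B a) < m" using m fin by (metis finite_Diff psubset_card_mono)
      then obtain \<psi>' where p1: "is_char G (carrier G) \<psi>'" and p2: "\<forall>b\<in>adj B a. \<psi>' b = \<psi> b"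
        using less B' psi(1) by blast
      have "\<forall>b\<in>B. \<psi>' b = \<chi> b" using p2 psi(2) sup(1) by auto
      then show ?thesis using p1 by blast
    qed
  qed
qed

lemma char_extend:
  assumes "finite (carrier G)" "subgroup B G" "is_char G B \<chi>"
  shows "\<exists>\<psi>. is_char G (carrier G) \<psi> \<and> (\<forall>b\<in>B. \<psi> b = \<chi> b)"
  using char_extend_aux[OF assms(1)] assms(2,3) by blast

lemma char_separate:
  assumes fin: "finite (carrier G)" and z: "z \<in> carrier G" "z \<noteq> \<one>"
  shows "\<exists>\<psi>. is_char G (carrier G) \<psi> \<and> \<psi> z \<noteq> 1"
proof -
  have B: "subgroup {\<one>} G" using triv_subgroup .
  have chi: "is_char G {\<one>} (\<lambda>_. 1)" unfolding is_char_def by simp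
  define n where "n = (LEAST n::nat. 0 < n \<and> z [^] n \<in> {\<one>})"
  have np: "0 < n \<and> z [^] n \<in> {\<one>}" using least_pow_in(1)[OF fin B z(1)] unfolding n_def .
  have "n \<noteq> 1" using np z by auto
  then have n2: "1 < n" using np by simp
  define c where "c = cis (2 * pi * real 1 / real n)"
  have inj: "inj_on (\<lambda>k. cis (2 * pi * real k / real n)) {..<n}"
    using bij_betw_roots_unity[of n] np unfolding bij_betw_def by simp
  have "c \<noteq> cis (2 * pi * real 0 / real n)"
    unfolding c_def using inj_onD[OF inj, of 1 0] n2 by auto
  then have c1: "c \<noteq> 1" by simp
  have "c \<in> (\<lambda>k. cis (2 * pi * real k / real n)) ` {..<n}" unfolding c_def using n2
    by (intro image_eqI[where x=1]) auto
  then have "c \<in> {z. z ^ n = 1}" using bij_betw_roots_unity[of n] np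
    unfolding bij_betw_def by simp
  then have c: "c ^ n = (\<lambda>_. 1) (z [^] n)" by simp
  obtain \<psi> where psi: "is_char G (adj {\<one>} z) \<psi>" "\<psi> z = c"
    using ext_step[OF fin B z(1) chi n_def c] by blast
  obtain \<psi>' where "is_char G (carrier G) \<psi>'" "\<forall>b\<in>adj {\<one>} z. \<psi>' b = \<psi> b"
    using char_extend[OF fin adj_subgroup[OF fin B z(1)] psi(1)] by blast
  moreover have "z \<in> adj {\<one>} z" using adj_sup[OF B z(1)] by simp
  ultimately show ?thesis using psi(2) c1 by auto
qed

end


lemma (in comm_group) sub_comm_group:
  assumes "subgroup Z G" shows "comm_group (G\<lparr>carrier := Z\<rparr>)"
proof -
  have g: "group (G\<lparr>carrier := Z\<rparr>)" using subgroup.subgroup_is_group[OF assms is_group] .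
  show ?thesis
    by (rule group.group_comm_groupI[OF g]) (use subgroup.mem_carrier[OF assms] m_comm in simp)
qed

lemma is_char_sub: "is_char (G\<lparr>carrier := Z\<rparr>) (carrier (G\<lparr>carrier := Z\<rparr>)) \<chi> = is_char G Z \<chi>"
  unfolding is_char_def by simp

locale fourier = comm_group G for G (structure) +
  fixes Z :: "'a set" and \<rho> :: "'a \<Rightarrow> complex mat" and m :: nat
  assumes fin: "finite (carrier G)" and Zs: "subgroup Z G"
    and rho: "\<And>z. z \<in> Z \<Longrightarrow> \<rho> z \<in> carrier_mat m m"
    and rho_mult: "\<And>x y. x \<in> Z \<Longrightarrow> y \<in> Z \<Longrightarrow> \<rho> (x \<otimes> y) = \<rho> x * \<rho> y"
    and rho_one: "\<rho> \<one> = 1\<^sub>m m"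
begin

definition Chars :: "('a \<Rightarrow> complex) set" where
  "Chars = {\<chi>. is_char G Z \<chi> \<and> (\<forall>x. x \<notin> Z \<longrightarrow> \<chi> x = 1)}"

abbreviation "nZ \<equiv> card Z"

lemma Zc: "z \<in> Z \<Longrightarrow> z \<in> carrier G" using subgroup.mem_carrier[OF Zs] .
lemma finZ: "finite Z" using finite_subset[OF subgroup.subset[OF Zs] fin] .
lemma Npos: "0 < nZ" using finZ subgroup.one_closed[OF Zs] by (simp add: card_gt_0_iff, auto)
lemma Zcg: "comm_group (G\<lparr>carrier := Z\<rparr>)" using sub_comm_group[OF Zs] .
lemma one_Z: "\<one> \<in> Z" using subgroup.one_closed[OF Zs] .
lemma mult_Z: "x \<in> Z \<Longrightarrow> y \<in> Z \<Longrightarrow> x \<otimes> y \<in> Z" using subgroup.m_closed[OF Zs] .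
lemma inv_Z: "x \<in> Z \<Longrightarrow> inv x \<in> Z" using subgroup.m_inv_closed[OF Zs] .

lemma X_char: "\<chi> \<in> Chars \<Longrightarrow> x \<in> Z \<Longrightarrow> y \<in> Z \<Longrightarrow> \<chi> (x \<otimes> y) = \<chi> x * \<chi> y"
  unfolding Chars_def is_char_def by simp
lemma X_one: "\<chi> \<in> Chars \<Longrightarrow> \<chi> \<one> = 1"
  unfolding Chars_def is_char_def by simp
lemma X_inv: "\<chi> \<in> Chars \<Longrightarrow> x \<in> Z \<Longrightarrow> \<chi> (inv x) * \<chi> x = 1"
proof -
  assume "\<chi> \<in> Chars" "x \<in> Z"
  then show ?thesis using char_inv[OF Zs, of \<chi> x] unfolding Chars_def by simp
qed

lemma X_root: "\<chi> \<in> Chars \<Longrightarrow> x \<in> Z \<Longrightarrow> \<chi> x ^ nZ = 1"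
proof -
  assume c: "\<chi> \<in> Chars" and x: "x \<in> Z"
  interpret Zg: comm_group "G\<lparr>carrier := Z\<rparr>" using Zcg .
  have "x [^]\<^bsub>G\<lparr>carrier := Z\<rparr>\<^esub> order (G\<lparr>carrier := Z\<rparr>) = \<one>\<^bsub>G\<lparr>carrier := Z\<rparr>\<^esub>"
    using Zg.pow_order_eq_1 x by simp
  moreover have "x [^]\<^bsub>G\<lparr>carrier := Z\<rparr>\<^esub> nZ = x [^] nZ" by (rule nat_pow_consistent[symmetric])
  ultimately have "x [^] nZ = \<one>" unfolding order_def by simp
  moreover have "\<chi> (x [^] nZ) = \<chi> x ^ nZ" using char_pow[OF Zs _ x, of \<chi>] c unfolding Chars_def by simp
  ultimately show ?thesis using X_one[OF c] by simp
qed

lemma finite_X: "finite Chars"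
proof -
  let ?R = "{w::complex. w ^ nZ = 1}"
  have fR: "finite ?R" using finite_roots_unity[of nZ] Npos by simp
  let ?f = "\<lambda>g x. if x \<in> Z then g x else (1::complex)"
  have "Chars \<subseteq> ?f ` (Z \<rightarrow>\<^sub>E ?R)"
  proof
    fix \<chi> assume c: "\<chi> \<in> Chars"
    have "\<chi> = ?f (restrict \<chi> Z)" using c unfolding Chars_def by (auto simp: fun_eq_iff)
    moreover have "restrict \<chi> Z \<in> Z \<rightarrow>\<^sub>E ?R" using X_root[OF c] by auto
    ultimately show "\<chi> \<in> ?f ` (Z \<rightarrow>\<^sub>E ?R)" by (rule image_eqI)
  qed
  moreover have "finite (?f ` (Z \<rightarrow>\<^sub>E ?R))" by (intro finite_imageI finite_PiE finZ fR)
  ultimately show ?thesis by (rule finite_subset)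
qed

lemma triv_X: "(\<lambda>_. 1) \<in> Chars" unfolding Chars_def is_char_def by simp

lemma sum_char_zero:
  assumes f: "\<And>x y. x \<in> Z \<Longrightarrow> y \<in> Z \<Longrightarrow> f (x \<otimes> y) = f x * (f y :: complex)"
    and y: "y \<in> Z" "f y \<noteq> 1"
  shows "(\<Sum>z\<in>Z. f z) = 0"
proof -
  have bij: "bij_betw (\<lambda>z. y \<otimes> z) Z Z"
  proof -
    have "inj_on (\<lambda>z. y \<otimes> z) Z" using y(1) Zc by (auto intro: inj_onI)
    moreover have "(\<lambda>z. y \<otimes> z) ` Z = Z"
    proof
      show "(\<lambda>z. y \<otimes> z) ` Z \<subseteq> Z" using mult_Z y(1) by auto
      show "Z \<subseteq> (\<lambda>z. y \<otimes> z) ` Z"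
      proof
        fix z assume z: "z \<in> Z"
        have "z = y \<otimes> (inv y \<otimes> z)" using z y(1) Zc by (simp add: m_assoc[symmetric])
        moreover have "inv y \<otimes> z \<in> Z" using mult_Z inv_Z y(1) z by simp
        ultimately show "z \<in> (\<lambda>z. y \<otimes> z) ` Z" by blast
      qed
    qed
    ultimately show ?thesis unfolding bij_betw_def by simp
  qed
  have "(\<Sum>z\<in>Z. f z) = (\<Sum>z\<in>Z. f (y \<otimes> z))" using sum.reindex_bij_betw[OF bij, of f] by simp
  also have "\<dots> = f y * (\<Sum>z\<in>Z. f z)" using f y(1) by (simp add: sum_distrib_left)
  finally have "(1 - f y) * (\<Sum>z\<in>Z. f z) = 0" by (simp add: algebra_simps)
  then show ?thesis using y(2) by simp
qed

lemma orth:
  assumes c: "\<chi> \<in> Chars" "\<psi> \<in> Chars"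
  shows "(\<Sum>z\<in>Z. \<chi> (inv z) * \<psi> z) = (if \<chi> = \<psi> then of_nat nZ else 0)"
proof (cases "\<chi> = \<psi>")
  case True
  then show ?thesis using X_inv[OF c(1)] by simp
next
  case False
  then obtain y where y2: "\<chi> y \<noteq> \<psi> y" by (auto simp: fun_eq_iff)
  have "y \<in> Z"
  proof (rule ccontr)
    assume "y \<notin> Z" then show False using c y2 unfolding Chars_def by simp
  qed
  note y = this y2
  have f: "\<chi> (inv (x \<otimes> z)) * \<psi> (x \<otimes> z) = (\<chi> (inv x) * \<psi> x) * (\<chi> (inv z) * \<psi> z)"
    if "x \<in> Z" "z \<in> Z" for x z
  proof -
    have "inv (x \<otimes> z) = inv x \<otimes> inv z" using that Zc by (simp add: inv_mult m_comm)
    then show ?thesis using X_char[OF c(1)] X_char[OF c(2)] inv_Z that by simp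
  qed
  have "\<chi> (inv y) * \<psi> y \<noteq> 1"
  proof
    assume e: "\<chi> (inv y) * \<psi> y = 1"
    have "\<psi> y = \<psi> y * (\<chi> (inv y) * \<chi> y)" using X_inv[OF c(1) y(1)] by simp
    also have "\<dots> = (\<chi> (inv y) * \<psi> y) * \<chi> y" by (simp add: algebra_simps)
    also have "\<dots> = \<chi> y" using e by simp
    finally have "\<psi> y = \<chi> y" .
    then show False using y(2) by simp
  qed
  then have "(\<Sum>z\<in>Z. \<chi> (inv z) * \<psi> z) = 0" using sum_char_zero[OF f y(1)] by blast
  then show ?thesis using False by simp
qed


lemma lmult_bij: assumes y: "y \<in> Z" shows "bij_betw (\<lambda>z. y \<otimes> z) Z Z"
proof -
  have "inj_on (\<lambda>z. y \<otimes> z) Z" using y Zc by (auto intro: inj_onI)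
  moreover have "(\<lambda>z. y \<otimes> z) ` Z = Z"
  proof
    show "(\<lambda>z. y \<otimes> z) ` Z \<subseteq> Z" using mult_Z y by auto
    show "Z \<subseteq> (\<lambda>z. y \<otimes> z) ` Z"
    proof
      fix z assume z: "z \<in> Z"
      have "z = y \<otimes> (inv y \<otimes> z)" using z y Zc by (simp add: m_assoc[symmetric])
      moreover have "inv y \<otimes> z \<in> Z" using mult_Z inv_Z y z by simp
      ultimately show "z \<in> (\<lambda>z. y \<otimes> z) ` Z" by (rule image_eqI)
    qed
  qed
  ultimately show ?thesis unfolding bij_betw_def by simp
qed

lemma sum_reindex_Z: "y \<in> Z \<Longrightarrow> (\<Sum>w\<in>Z. h w) = (\<Sum>u\<in>Z. h (y \<otimes> u))"
  using sum.reindex_bij_betw[OF lmult_bij, of y h] by simp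

lemma sum_chars:
  assumes w: "w \<in> Z"
  shows "(\<Sum>\<chi>\<in>Chars. \<chi> w) = (if w = \<one> then of_nat (card Chars) else 0)"
proof (cases "w = \<one>")
  case True
  have "(\<Sum>\<chi>\<in>Chars. \<chi> w) = (\<Sum>\<chi>\<in>Chars. 1)" using X_one True by (intro sum.cong) auto
  then show ?thesis using True by simp
next
  case False
  interpret Zg: comm_group "G\<lparr>carrier := Z\<rparr>" using Zcg .
  have "\<exists>\<psi>. is_char (G\<lparr>carrier := Z\<rparr>) (carrier (G\<lparr>carrier := Z\<rparr>)) \<psi> \<and> \<psi> w \<noteq> 1"
    using Zg.char_separate finZ w False by simp
  then obtain \<psi>0 where p0: "is_char G Z \<psi>0" "\<psi>0 w \<noteq> 1" unfolding is_char_sub by blast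
  define \<psi> where "\<psi> x = (if x \<in> Z then \<psi>0 x else 1)" for x
  have psi: "\<psi> \<in> Chars" using p0(1) one_Z mult_Z unfolding Chars_def is_char_def \<psi>_def by simp
  have psiw: "\<psi> w \<noteq> 1" using p0(2) w unfolding \<psi>_def by simp
  define T where "T \<chi> x = (if x \<in> Z then \<psi> x * \<chi> x else 1)" for \<chi> x
  have TC: "T \<chi> \<in> Chars" if c: "\<chi> \<in> Chars" for \<chi>
  proof -
    have "T \<chi> \<one> = 1" unfolding T_def using one_Z X_one[OF c] X_one[OF psi] by simp
    moreover have "T \<chi> (x \<otimes> y) = T \<chi> x * T \<chi> y" if "x \<in> Z" "y \<in> Z" for x y
      unfolding T_def using that mult_Z X_char[OF c] X_char[OF psi] by simp
    ultimately show ?thesis unfolding Chars_def is_char_def T_def by simp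
  qed
  have inj: "inj_on T Chars"
  proof (rule inj_onI)
    fix \<chi> \<chi>' assume c: "\<chi> \<in> Chars" "\<chi>' \<in> Chars" and e: "T \<chi> = T \<chi>'"
    show "\<chi> = \<chi>'"
    proof
      fix x show "\<chi> x = \<chi>' x"
      proof (cases "x \<in> Z")
        case True
        have "\<psi> x * \<chi> x = \<psi> x * \<chi>' x" using fun_cong[OF e, of x] True unfolding T_def by simp
        moreover have "\<psi> x \<noteq> 0" using X_inv[OF psi True] by auto
        ultimately show ?thesis by simp
      next
        case False then show ?thesis using c unfolding Chars_def by simp
      qed
    qed
  qed
  have im: "T ` Chars = Chars"
  proof (rule card_subset_eq[OF finite_X])
    show "T ` Chars \<subseteq> Chars" using TC by auto
    show "card (T ` Chars) = card Chars" using card_image[OF inj] .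
  qed
  have "(\<Sum>\<chi>\<in>Chars. \<chi> w) = (\<Sum>\<chi>\<in>T ` Chars. \<chi> w)" using im by simp
  also have "\<dots> = (\<Sum>\<chi>\<in>Chars. T \<chi> w)" using sum.reindex[OF inj, of "\<lambda>\<chi>. \<chi> w"] by simp
  also have "\<dots> = \<psi> w * (\<Sum>\<chi>\<in>Chars. \<chi> w)" unfolding T_def using w by (simp add: sum_distrib_left)
  finally have "(1 - \<psi> w) * (\<Sum>\<chi>\<in>Chars. \<chi> w) = 0" by (simp add: algebra_simps)
  then show ?thesis using psiw False by simp
qed


definition L :: "('a \<Rightarrow> complex) \<Rightarrow> complex mat" where
  "L f = mat m m (\<lambda>(i,j). \<Sum>z\<in>Z. f z * \<rho> z $$ (i,j))"

lemma L_carrier: "L f \<in> carrier_mat m m" unfolding L_def by simp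
lemma L_dim[simp]: "dim_row (L f) = m" "dim_col (L f) = m" unfolding L_def by simp_all
lemma rho_dim: "z \<in> Z \<Longrightarrow> dim_row (\<rho> z) = m \<and> dim_col (\<rho> z) = m" using rho by auto

lemma L_cong: "(\<And>z. z \<in> Z \<Longrightarrow> f z = g z) \<Longrightarrow> L f = L g"
  unfolding L_def by (intro cong_mat refl) (auto intro: sum.cong)

lemma L_index: "i < m \<Longrightarrow> j < m \<Longrightarrow> L f $$ (i,j) = (\<Sum>z\<in>Z. f z * \<rho> z $$ (i,j))"
  unfolding L_def by simp

lemma L_delta: assumes y: "y \<in> Z" shows "L (\<lambda>z. if z = y then 1 else 0) = \<rho> y"
proof (rule eq_matI)
  show "dim_row (L (\<lambda>z. if z = y then 1 else 0)) = dim_row (\<rho> y)" using rho[OF y] L_carrier by simp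
  show "dim_col (L (\<lambda>z. if z = y then 1 else 0)) = dim_col (\<rho> y)" using rho[OF y] L_carrier by simp
  fix i j assume "i < dim_row (\<rho> y)" "j < dim_col (\<rho> y)"
  then have ij: "i < m" "j < m" using rho[OF y] by auto
  have "(\<Sum>z\<in>Z. (if z = y then 1 else 0) * \<rho> z $$ (i,j)) = (\<Sum>z\<in>Z. if z = y then \<rho> z $$ (i,j) else 0)"
    by (intro sum.cong) auto
  also have "\<dots> = \<rho> y $$ (i,j)" using y finZ by (simp add: sum.delta')
  finally have "(\<Sum>z\<in>Z. (if z = y then 1 else 0) * \<rho> z $$ (i,j)) = \<rho> y $$ (i,j)" .
  then show "L (\<lambda>z. if z = y then 1 else 0) $$ (i, j) = \<rho> y $$ (i, j)" using L_index[OF ij] by simp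
qed

lemma prod_entry:
  assumes "x \<in> Z" "y \<in> Z" "i < m" "j < m"
  shows "\<rho> (x \<otimes> y) $$ (i,j) = (\<Sum>k<m. \<rho> x $$ (i,k) * \<rho> y $$ (k,j))"
proof -
  have "\<rho> (x \<otimes> y) $$ (i,j) = (\<rho> x * \<rho> y) $$ (i,j)" using rho_mult assms by simp
  also have "\<dots> = row (\<rho> x) i \<bullet> col (\<rho> y) j" using rho_dim assms by (simp add: index_mult_mat)
  also have "\<dots> = (\<Sum>k<m. \<rho> x $$ (i,k) * \<rho> y $$ (k,j))"
    unfolding scalar_prod_def using rho_dim assms by (auto simp: lessThan_atLeast0 intro: sum.cong)
  finally show ?thesis .
qed

lemma L_mult: "L f * L g = L (\<lambda>u. \<Sum>z\<in>Z. f z * g (inv z \<otimes> u))"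
proof (rule eq_matI)
  show "dim_row (L f * L g) = dim_row (L (\<lambda>u. \<Sum>z\<in>Z. f z * g (inv z \<otimes> u)))" using L_carrier by simp
  show "dim_col (L f * L g) = dim_col (L (\<lambda>u. \<Sum>z\<in>Z. f z * g (inv z \<otimes> u)))" using L_carrier by simp
  fix i j assume "i < dim_row (L (\<lambda>u. \<Sum>z\<in>Z. f z * g (inv z \<otimes> u)))"
    "j < dim_col (L (\<lambda>u. \<Sum>z\<in>Z. f z * g (inv z \<otimes> u)))"
  then have ij: "i < m" "j < m" using L_carrier by auto
  have reind: "(\<Sum>w\<in>Z. (f z * g w) * \<rho> (z \<otimes> w) $$ (i,j))
        = (\<Sum>u\<in>Z. (f z * g (inv z \<otimes> u)) * \<rho> u $$ (i,j))" if z: "z \<in> Z" for z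
  proof -
    have "(\<Sum>w\<in>Z. (f z * g w) * \<rho> (z \<otimes> w) $$ (i,j))
        = (\<Sum>u\<in>Z. (f z * g (inv z \<otimes> u)) * \<rho> (z \<otimes> (inv z \<otimes> u)) $$ (i,j))"
      by (rule sum_reindex_Z[OF inv_Z[OF z], of "\<lambda>w. (f z * g w) * \<rho> (z \<otimes> w) $$ (i,j)"])
    also have "\<dots> = (\<Sum>u\<in>Z. (f z * g (inv z \<otimes> u)) * \<rho> u $$ (i,j))"
      using z Zc by (intro sum.cong refl) (simp add: m_assoc[symmetric])
    finally show ?thesis .
  qed
  have "(L f * L g) $$ (i,j) = row (L f) i \<bullet> col (L g) j" using ij L_carrier by simp
  also have "\<dots> = (\<Sum>k<m. L f $$ (i,k) * L g $$ (k,j))"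
    unfolding scalar_prod_def using ij L_carrier by (auto simp: lessThan_atLeast0 intro: sum.cong)
  also have "\<dots> = (\<Sum>k<m. (\<Sum>z\<in>Z. f z * \<rho> z $$ (i,k)) * (\<Sum>w\<in>Z. g w * \<rho> w $$ (k,j)))"
    using ij by (intro sum.cong refl) (simp add: L_index)
  also have "\<dots> = (\<Sum>k<m. \<Sum>z\<in>Z. \<Sum>w\<in>Z. (f z * g w) * (\<rho> z $$ (i,k) * \<rho> w $$ (k,j)))"
    by (intro sum.cong refl) (simp add: sum_product mult_ac)
  also have "\<dots> = (\<Sum>z\<in>Z. \<Sum>w\<in>Z. \<Sum>k<m. (f z * g w) * (\<rho> z $$ (i,k) * \<rho> w $$ (k,j)))"
    by (subst sum.swap) (rule sum.cong[OF refl], rule sum.swap)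
  also have "\<dots> = (\<Sum>z\<in>Z. \<Sum>w\<in>Z. (f z * g w) * \<rho> (z \<otimes> w) $$ (i,j))"
    using ij by (intro sum.cong refl) (simp add: prod_entry sum_distrib_left)
  also have "\<dots> = (\<Sum>z\<in>Z. \<Sum>u\<in>Z. (f z * g (inv z \<otimes> u)) * \<rho> u $$ (i,j))"
    using reind by (rule sum.cong[OF refl])
  also have "\<dots> = (\<Sum>u\<in>Z. (\<Sum>z\<in>Z. f z * g (inv z \<otimes> u)) * \<rho> u $$ (i,j))"
    by (subst sum.swap) (simp add: sum_distrib_right)
  also have "\<dots> = L (\<lambda>u. \<Sum>z\<in>Z. f z * g (inv z \<otimes> u)) $$ (i,j)" using L_index[OF ij] by simp
  finally show "(L f * L g) $$ (i,j) = L (\<lambda>u. \<Sum>z\<in>Z. f z * g (inv z \<otimes> u)) $$ (i,j)" .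
qed


definition ext :: "('a \<Rightarrow> complex) \<Rightarrow> 'a \<Rightarrow> complex" where
  "ext \<chi> = (SOME \<psi>. is_char G (carrier G) \<psi> \<and> (\<forall>b\<in>Z. \<psi> b = \<chi> b))"

lemma ext_ok: assumes c: "\<chi> \<in> Chars"
  shows "is_char G (carrier G) (ext \<chi>) \<and> (\<forall>b\<in>Z. ext \<chi> b = \<chi> b)"
proof -
  have "is_char G Z \<chi>" using c unfolding Chars_def by simp
  then have "\<exists>\<psi>. is_char G (carrier G) \<psi> \<and> (\<forall>b\<in>Z. \<psi> b = \<chi> b)" using char_extend[OF fin Zs] by simp
  then show ?thesis unfolding ext_def by (rule someI_ex)
qed

lemma ext_mult: "\<chi> \<in> Chars \<Longrightarrow> a \<in> carrier G \<Longrightarrow> b \<in> carrier G \<Longrightarrow> ext \<chi> (a \<otimes> b) = ext \<chi> a * ext \<chi> b"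
  using ext_ok unfolding is_char_def by blast

lemma ext_one: "\<chi> \<in> Chars \<Longrightarrow> ext \<chi> \<one> = 1"
  using ext_ok unfolding is_char_def by blast

lemma ext_Z: "\<chi> \<in> Chars \<Longrightarrow> b \<in> Z \<Longrightarrow> ext \<chi> b = \<chi> b"
  using ext_ok by blast

definition F :: "'a \<Rightarrow> 'a \<Rightarrow> complex" where
  "F a z = (\<Sum>\<chi>\<in>Chars. ext \<chi> a * \<chi> (inv z)) / of_nat nZ"

lemma nZ_nz: "(of_nat nZ :: complex) \<noteq> 0" using Npos by simp

lemma F_conv:
  assumes a: "a \<in> carrier G" and b: "b \<in> carrier G" and u: "u \<in> Z"
  shows "(\<Sum>z\<in>Z. F a z * F b (inv z \<otimes> u)) = F (a \<otimes> b) u"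
proof -
  let ?n = "of_nat nZ :: complex"
  have inv_eq: "\<psi> (inv (inv z \<otimes> u)) = \<psi> (inv u) * \<psi> z" if z: "z \<in> Z" and p: "\<psi> \<in> Chars" for z \<psi>
  proof -
    have "inv (inv z \<otimes> u) = inv u \<otimes> z" using z u Zc by (simp add: inv_mult_group)
    then show ?thesis using X_char[OF p inv_Z[OF u] z] by simp
  qed
  have "(\<Sum>z\<in>Z. F a z * F b (inv z \<otimes> u))
      = (\<Sum>z\<in>Z. ((\<Sum>\<chi>\<in>Chars. ext \<chi> a * \<chi> (inv z)) * (\<Sum>\<psi>\<in>Chars. ext \<psi> b * (\<psi> (inv u) * \<psi> z))) / (?n * ?n))"
  proof (rule sum.cong[OF refl])
    fix z assume z: "z \<in> Z"
    have "(\<Sum>\<psi>\<in>Chars. ext \<psi> b * \<psi> (inv (inv z \<otimes> u))) = (\<Sum>\<psi>\<in>Chars. ext \<psi> b * (\<psi> (inv u) * \<psi> z))"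
      using inv_eq[OF z] by (intro sum.cong refl) simp
    then show "F a z * F b (inv z \<otimes> u) = ((\<Sum>\<chi>\<in>Chars. ext \<chi> a * \<chi> (inv z)) * (\<Sum>\<psi>\<in>Chars. ext \<psi> b * (\<psi> (inv u) * \<psi> z))) / (?n * ?n)"
      unfolding F_def by simp
  qed
  also have "\<dots> = (\<Sum>z\<in>Z. \<Sum>\<chi>\<in>Chars. \<Sum>\<psi>\<in>Chars. (ext \<chi> a * ext \<psi> b * \<psi> (inv u)) * (\<chi> (inv z) * \<psi> z)) / (?n * ?n)"
    unfolding sum_divide_distrib[symmetric] by (intro arg_cong2[where f="(/)"] sum.cong refl) (simp add: sum_product mult_ac)
  also have "(\<Sum>z\<in>Z. \<Sum>\<chi>\<in>Chars. \<Sum>\<psi>\<in>Chars. (ext \<chi> a * ext \<psi> b * \<psi> (inv u)) * (\<chi> (inv z) * \<psi> z))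
      = (\<Sum>\<chi>\<in>Chars. \<Sum>\<psi>\<in>Chars. \<Sum>z\<in>Z. (ext \<chi> a * ext \<psi> b * \<psi> (inv u)) * (\<chi> (inv z) * \<psi> z))"
    by (subst sum.swap) (rule sum.cong[OF refl], rule sum.swap)
  also have "\<dots> = (\<Sum>\<chi>\<in>Chars. \<Sum>\<psi>\<in>Chars. (ext \<chi> a * ext \<psi> b * \<psi> (inv u)) * (if \<chi> = \<psi> then ?n else 0))"
    by (intro sum.cong refl) (simp add: sum_distrib_left[symmetric] orth)
  also have "\<dots> = (\<Sum>\<chi>\<in>Chars. (ext \<chi> a * ext \<chi> b * \<chi> (inv u)) * ?n)"
  proof (rule sum.cong[OF refl])
    fix \<chi> assume c: "\<chi> \<in> Chars"
    have "(\<Sum>\<psi>\<in>Chars. (ext \<chi> a * ext \<psi> b * \<psi> (inv u)) * (if \<chi> = \<psi> then ?n else 0))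
        = (\<Sum>\<psi>\<in>Chars. if \<chi> = \<psi> then (ext \<chi> a * ext \<psi> b * \<psi> (inv u)) * ?n else 0)"
      by (intro sum.cong refl) simp
    also have "\<dots> = (ext \<chi> a * ext \<chi> b * \<chi> (inv u)) * ?n" using c finite_X by (simp add: sum.delta)
    finally show "(\<Sum>\<psi>\<in>Chars. (ext \<chi> a * ext \<psi> b * \<psi> (inv u)) * (if \<chi> = \<psi> then ?n else 0))
        = (ext \<chi> a * ext \<chi> b * \<chi> (inv u)) * ?n" .
  qed
  also have "\<dots> = (\<Sum>\<chi>\<in>Chars. ext \<chi> (a \<otimes> b) * \<chi> (inv u)) * ?n"
    unfolding sum_distrib_right using ext_mult a b by (intro sum.cong refl) simp
  finally show ?thesis unfolding F_def using nZ_nz by (simp add: field_simps)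
qed

lemma F_one: assumes z: "z \<in> Z"
  shows "F \<one> z = (if z = \<one> then of_nat (card Chars) else 0) / of_nat nZ"
proof -
  have "(\<Sum>\<chi>\<in>Chars. ext \<chi> \<one> * \<chi> (inv z)) = (\<Sum>\<chi>\<in>Chars. \<chi> (inv z))"
    using ext_one by (intro sum.cong refl) simp
  also have "\<dots> = (if z = \<one> then of_nat (card Chars) else 0)"
    using sum_chars[OF inv_Z[OF z]] z Zc by (simp add: inv_eq_one_eq)
  finally show ?thesis unfolding F_def by simp
qed

lemma card_Chars: "card Chars = nZ"
proof -
  define k where "k = (of_nat (card Chars) / of_nat nZ :: complex)"
  have "(\<Sum>z\<in>Z. F \<one> z * F \<one> (inv z \<otimes> \<one>)) = F (\<one> \<otimes> \<one>) \<one>" using F_conv one_Z by simp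
  moreover have "(\<Sum>z\<in>Z. F \<one> z * F \<one> (inv z \<otimes> \<one>)) = (\<Sum>z\<in>Z. if z = \<one> then k * k else 0)"
  proof (rule sum.cong[OF refl])
    fix z assume z: "z \<in> Z"
    have "inv z \<otimes> \<one> = inv z" using z Zc by simp
    moreover have "(inv z = \<one>) = (z = \<one>)" using z Zc by (simp add: inv_eq_one_eq)
    ultimately show "F \<one> z * F \<one> (inv z \<otimes> \<one>) = (if z = \<one> then k * k else 0)"
      using F_one[OF z] F_one[OF inv_Z[OF z]] unfolding k_def by simp
  qed
  moreover have "(\<Sum>z\<in>Z. if z = \<one> then k * k else 0) = k * k" using one_Z finZ by (simp add: sum.delta')
  moreover have "F (\<one> \<otimes> \<one>) \<one> = k" using F_one[OF one_Z] unfolding k_def by simp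
  ultimately have "k * k = k" by simp
  moreover have "k \<noteq> 0" unfolding k_def using nZ_nz finite_X triv_X card_gt_0_iff by fastforce
  ultimately have "k = 1" by simp
  then show ?thesis unfolding k_def using nZ_nz by (simp add: divide_eq_1_iff)
qed

lemma F_Z: assumes y: "y \<in> Z" and z: "z \<in> Z"
  shows "F y z = (if z = y then 1 else 0)"
proof -
  have "(\<Sum>\<chi>\<in>Chars. ext \<chi> y * \<chi> (inv z)) = (\<Sum>\<chi>\<in>Chars. \<chi> (y \<otimes> inv z))"
    using ext_Z y X_char inv_Z z by (intro sum.cong refl) simp
  also have "\<dots> = (if y \<otimes> inv z = \<one> then of_nat nZ else 0)"
    using sum_chars[OF mult_Z[OF y inv_Z[OF z]]] card_Chars by simp
  also have "(y \<otimes> inv z = \<one>) = (z = y)"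
  proof
    assume "y \<otimes> inv z = \<one>"
    then have "y \<otimes> inv z \<otimes> z = z" using z Zc by simp
    then show "z = y" using y z Zc by (simp add: m_assoc)
  next
    assume "z = y" then show "y \<otimes> inv z = \<one>" using y Zc by simp
  qed
  finally show ?thesis unfolding F_def using nZ_nz by simp
qed

definition sigma :: "'a \<Rightarrow> complex mat" where "sigma a = L (F a)"

lemma sigma_carrier: "sigma a \<in> carrier_mat m m" unfolding sigma_def using L_carrier .

lemma sigma_mult: "a \<in> carrier G \<Longrightarrow> b \<in> carrier G \<Longrightarrow> sigma (a \<otimes> b) = sigma a * sigma b"
  unfolding sigma_def L_mult by (intro L_cong) (simp add: F_conv)

lemma sigma_Z: assumes y: "y \<in> Z" shows "sigma y = \<rho> y"
proof -
  have "sigma y = L (\<lambda>z. if z = y then 1 else 0)" unfolding sigma_def using F_Z[OF y] by (intro L_cong) simp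
  then show ?thesis using L_delta[OF y] by simp
qed

lemma sigma_one: "sigma \<one> = 1\<^sub>m m" using sigma_Z[OF one_Z] rho_one by simp

end


lemma mat_mult_entry:
  assumes "B \<in> carrier_mat n k" "C \<in> carrier_mat k n'" "p < n" "q < n'"
  shows "(B * C) $$ (p,q) = (\<Sum>l<k. B $$ (p,l) * C $$ (l,q))"
  using assms by (auto simp: scalar_prod_def lessThan_atLeast0 intro: sum.cong)

lemma split_sum: fixes t m :: nat and f :: "nat \<Rightarrow> 'b::comm_monoid_add"
  shows "(\<Sum>J<t*m. f J) = (\<Sum>j<t. \<Sum>l<m. f (j*m + l))"
proof -
  have "(\<Sum>J<t*m. f J) = (\<Sum>j<t. sum f {j*m..<j*m+m})" using sum.nat_group[of f m t] by simp
  also have "\<dots> = (\<Sum>j<t. \<Sum>l<m. f (j*m + l))"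
  proof (rule sum.cong[OF refl])
    fix j
    have "sum f {0 + j*m..<m + j*m} = sum (\<lambda>l. f (l + j*m)) {0..<m}" by (rule sum.shift_bounds_nat_ivl)
    then show "sum f {j*m..<j*m+m} = (\<Sum>l<m. f (j*m + l))" by (simp add: add.commute lessThan_atLeast0)
  qed
  finally show ?thesis .
qed

lemma divmod_lt: fixes J t m :: nat assumes "J < t * m" shows "J div m < t \<and> J mod m < m"
proof -
  have "m > 0" using assms by (cases m) auto
  then show ?thesis using assms less_mult_imp_div_less[of J t m] by simp
qed

locale induce = group H for H (structure) +
  fixes A :: "'a set" and \<sigma> :: "'a \<Rightarrow> complex mat" and m :: nat
  assumes fin: "finite (carrier H)" and As: "subgroup A H"
    and sig: "\<And>a. a \<in> A \<Longrightarrow> \<sigma> a \<in> carrier_mat m m"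
    and sig_mult: "\<And>a b. a \<in> A \<Longrightarrow> b \<in> A \<Longrightarrow> \<sigma> (a \<otimes> b) = \<sigma> a * \<sigma> b"
    and sig_one: "\<sigma> \<one> = 1\<^sub>m m"
begin

abbreviation "t \<equiv> card (rcosets A)"

lemma fin_rc: "finite (rcosets A)"
proof -
  have "rcosets A \<subseteq> Pow (carrier H)" using subgroup.rcosets_carrier[OF As is_group] by auto
  moreover have "finite (Pow (carrier H))" using fin by simp
  ultimately show ?thesis by (rule finite_subset)
qed

definition cos :: "nat \<Rightarrow> 'a set" where
  "cos = (SOME h. bij_betw h {..<t} (rcosets A))"

lemma cos_bij: "bij_betw cos {..<t} (rcosets A)"
proof -
  have "\<exists>h. bij_betw h {0..<t} (rcosets A)" using ex_bij_betw_nat_finite[OF fin_rc] .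
  then have "\<exists>h. bij_betw h {..<t} (rcosets A)" by (simp add: lessThan_atLeast0)
  then show ?thesis unfolding cos_def by (rule someI_ex)
qed

definition r :: "nat \<Rightarrow> 'a" where "r i = (SOME x. x \<in> carrier H \<and> cos i = A #> x)"

lemma r_ok: assumes i: "i < t" shows "r i \<in> carrier H \<and> cos i = A #> r i"
proof -
  have "cos i \<in> rcosets A" using cos_bij i unfolding bij_betw_def by auto
  then have "\<exists>x. x \<in> carrier H \<and> cos i = A #> x" unfolding RCOSETS_def by auto
  then show ?thesis unfolding r_def by (rule someI_ex)
qed

lemma r_car: "i < t \<Longrightarrow> r i \<in> carrier H" using r_ok[of i] by simp

lemma Ac: "a \<in> A \<Longrightarrow> a \<in> carrier H" using subgroup.mem_carrier[OF As] .

lemma coset_index: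
  assumes y: "y \<in> carrier H"
  shows "\<exists>j. j < t \<and> y \<otimes> inv (r j) \<in> A \<and> (\<forall>j'. j' < t \<and> y \<otimes> inv (r j') \<in> A \<longrightarrow> j' = j)"
proof -
  have mod: "y \<otimes> inv (r j) \<in> A \<longleftrightarrow> y \<in> cos j" if j: "j < t" for j
    using subgroup.rcos_module[OF As is_group r_car[OF j] y] r_ok[OF j] by simp
  have "A #> y \<in> rcosets A" using y unfolding RCOSETS_def by auto
  then have "A #> y \<in> cos ` {..<t}" using cos_bij unfolding bij_betw_def by simp
  then obtain j where j: "j < t" "cos j = A #> y" by auto
  have "y \<in> cos j" using j(2) rcos_self[OF y As] by simp
  then have ex: "j < t \<and> y \<otimes> inv (r j) \<in> A" using mod j(1) by simp
  have un: "j' = j" if "j' < t" "y \<otimes> inv (r j') \<in> A" for j'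
  proof (rule ccontr)
    assume ne: "j' \<noteq> j"
    have "cos j' \<noteq> cos j" using cos_bij ne that(1) j(1) unfolding bij_betw_def inj_on_def by auto
    moreover have "cos j' \<in> rcosets A" "cos j \<in> rcosets A" using cos_bij that(1) j(1) unfolding bij_betw_def by auto
    ultimately have "disjnt (cos j') (cos j)" using rcos_disjoint[OF As] unfolding pairwise_def by auto
    moreover have "y \<in> cos j'" using mod[OF that(1)] that(2) by simp
    ultimately show False using \<open>y \<in> cos j\<close> unfolding disjnt_def by auto
  qed
  show ?thesis using ex un by auto
qed

lemma r_inj_A: "i < t \<Longrightarrow> j < t \<Longrightarrow> r i \<otimes> inv (r j) \<in> A \<longleftrightarrow> i = j"
proof -
  assume i: "i < t" and j: "j < t"
  have ii: "r i \<otimes> inv (r i) \<in> A" using r_car[OF i] subgroup.one_closed[OF As] by simp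
  obtain k where k: "k < t" "\<forall>j'. j' < t \<and> r i \<otimes> inv (r j') \<in> A \<longrightarrow> j' = k"
    using coset_index[OF r_car[OF i]] by auto
  have "i = k" using k ii i by simp
  then show ?thesis using k ii i j by auto
qed

definition blk :: "'a \<Rightarrow> complex mat" where "blk y = (if y \<in> A then \<sigma> y else 0\<^sub>m m m)"

lemma blk_car: "blk y \<in> carrier_mat m m" unfolding blk_def using sig by simp

lemma blk_mult:
  assumes a: "a \<in> A" and b: "b \<in> carrier H"
  shows "blk a * blk b = blk (a \<otimes> b)"
proof (cases "b \<in> A")
  case True then show ?thesis using a sig_mult subgroup.m_closed[OF As a True] unfolding blk_def by simp
next
  case False
  have "a \<otimes> b \<notin> A"
  proof
    assume "a \<otimes> b \<in> A"
    then have "inv a \<otimes> (a \<otimes> b) \<in> A" using subgroup.m_closed[OF As subgroup.m_inv_closed[OF As a]] by simp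
    then show False using False a b Ac by (simp add: m_assoc[symmetric])
  qed
  then show ?thesis using False a right_mult_zero_mat[OF sig[OF a]] unfolding blk_def by simp
qed

definition Ind :: "'a \<Rightarrow> complex mat" where
  "Ind x = mat (t*m) (t*m) (\<lambda>(I,J). blk (r (I div m) \<otimes> x \<otimes> inv (r (J div m))) $$ (I mod m, J mod m))"

lemma Ind_carrier: "Ind x \<in> carrier_mat (t*m) (t*m)" unfolding Ind_def by simp
lemma Ind_dim[simp]: "dim_row (Ind x) = t*m" "dim_col (Ind x) = t*m" unfolding Ind_def by simp_all

lemma Ind_index: "I < t*m \<Longrightarrow> J < t*m \<Longrightarrow>
   Ind x $$ (I,J) = blk (r (I div m) \<otimes> x \<otimes> inv (r (J div m))) $$ (I mod m, J mod m)"
  unfolding Ind_def by simp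


lemma Ind_mult:
  assumes x: "x \<in> carrier H" and y: "y \<in> carrier H"
  shows "Ind (x \<otimes> y) = Ind x * Ind y"
proof (rule eq_matI)
  show "dim_row (Ind (x \<otimes> y)) = dim_row (Ind x * Ind y)" by simp
  show "dim_col (Ind (x \<otimes> y)) = dim_col (Ind x * Ind y)" by simp
  fix I K assume "I < dim_row (Ind x * Ind y)" "K < dim_col (Ind x * Ind y)"
  then have IK: "I < t*m" "K < t*m" by auto
  define i p k q where "i = I div m" "p = I mod m" "k = K div m" "q = K mod m"
  have ip: "i < t" "p < m" "k < t" "q < m" using divmod_lt IK unfolding i_p_k_q_def by auto
  have rc: "r i \<in> carrier H" "r k \<in> carrier H" using r_car ip by auto
  define \<alpha> where "\<alpha> j = r i \<otimes> x \<otimes> inv (r j)" for j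
  define \<beta> where "\<beta> j = r j \<otimes> y \<otimes> inv (r k)" for j
  obtain j0 where j0: "j0 < t" "\<alpha> j0 \<in> A" and j0u: "\<And>j. j < t \<Longrightarrow> \<alpha> j \<in> A \<Longrightarrow> j = j0"
    using coset_index[of "r i \<otimes> x"] rc x unfolding \<alpha>_def by auto
  have "(Ind x * Ind y) $$ (I,K) = (\<Sum>J<t*m. Ind x $$ (I,J) * Ind y $$ (J,K))"
    using IK by (intro mat_mult_entry[OF Ind_carrier Ind_carrier]) auto
  also have "\<dots> = (\<Sum>j<t. \<Sum>l<m. Ind x $$ (I,j*m+l) * Ind y $$ (j*m+l,K))" by (rule split_sum)
  also have "\<dots> = (\<Sum>j<t. \<Sum>l<m. blk (\<alpha> j) $$ (p,l) * blk (\<beta> j) $$ (l,q))"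
  proof (intro sum.cong refl)
    fix j l assume j: "j \<in> {..<t}" and l: "l \<in> {..<m}"
    have jl: "j*m + l < t*m"
    proof -
      have "j*m + l < j*m + m" using l by simp
      also have "\<dots> = (j+1)*m" by simp
      also have "\<dots> \<le> t*m" using j by (intro mult_right_mono) auto
      finally show ?thesis .
    qed
    have dm: "(j*m+l) div m = j" "(j*m+l) mod m = l" using l by auto
    show "Ind x $$ (I,j*m+l) * Ind y $$ (j*m+l,K) = blk (\<alpha> j) $$ (p,l) * blk (\<beta> j) $$ (l,q)"
      using Ind_index[OF IK(1) jl] Ind_index[OF jl IK(2)] dm unfolding \<alpha>_def \<beta>_def i_p_k_q_def by simp
  qed
  also have "\<dots> = (\<Sum>j<t. (blk (\<alpha> j) * blk (\<beta> j)) $$ (p,q))"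
    using ip by (intro sum.cong refl mat_mult_entry[OF blk_car blk_car, symmetric]) auto
  also have "\<dots> = (blk (\<alpha> j0) * blk (\<beta> j0)) $$ (p,q)"
  proof -
    have "(\<Sum>j<t. (blk (\<alpha> j) * blk (\<beta> j)) $$ (p,q))
        = (blk (\<alpha> j0) * blk (\<beta> j0)) $$ (p,q) + (\<Sum>j\<in>{..<t} - {j0}. (blk (\<alpha> j) * blk (\<beta> j)) $$ (p,q))"
      using j0(1) by (intro sum.remove) auto
    moreover have "(\<Sum>j\<in>{..<t} - {j0}. (blk (\<alpha> j) * blk (\<beta> j)) $$ (p,q)) = 0"
    proof (rule sum.neutral, rule ballI)
      fix j assume "j \<in> {..<t} - {j0}"
      then have "\<alpha> j \<notin> A" using j0u by auto
      then have "blk (\<alpha> j) = 0\<^sub>m m m" unfolding blk_def by simp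
      then have "blk (\<alpha> j) * blk (\<beta> j) = 0\<^sub>m m m"
        using left_mult_zero_mat[OF blk_car] by simp
      then show "(blk (\<alpha> j) * blk (\<beta> j)) $$ (p,q) = 0" using ip by simp
    qed
    ultimately show ?thesis by simp
  qed
  also have "\<dots> = blk (\<alpha> j0 \<otimes> \<beta> j0) $$ (p,q)"
    using blk_mult[OF j0(2)] r_car[OF j0(1)] rc y unfolding \<beta>_def by simp
  also have "\<alpha> j0 \<otimes> \<beta> j0 = r i \<otimes> (x \<otimes> y) \<otimes> inv (r k)"
  proof -
    have "inv (r j0) \<otimes> (r j0 \<otimes> (y \<otimes> inv (r k))) = y \<otimes> inv (r k)"
      using r_car[OF j0(1)] rc y by (simp add: m_assoc[symmetric])
    then show ?thesis using r_car[OF j0(1)] rc x y unfolding \<alpha>_def \<beta>_def by (simp add: m_assoc)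
  qed
  finally show "Ind (x \<otimes> y) $$ (I,K) = (Ind x * Ind y) $$ (I,K)"
    using Ind_index[OF IK] unfolding i_p_k_q_def by simp
qed

lemma Ind_one: "Ind \<one> = 1\<^sub>m (t*m)"
proof (rule eq_matI)
  show "dim_row (Ind \<one>) = dim_row (1\<^sub>m (t*m))" "dim_col (Ind \<one>) = dim_col (1\<^sub>m (t*m))" by simp_all
  fix I J assume "I < dim_row (1\<^sub>m (t*m))" "J < dim_col (1\<^sub>m (t*m))"
  then have IJ: "I < t*m" "J < t*m" by auto
  have d: "I div m < t" "I mod m < m" "J div m < t" "J mod m < m" using divmod_lt IJ by auto
  have e: "r (I div m) \<otimes> \<one> \<otimes> inv (r (J div m)) = r (I div m) \<otimes> inv (r (J div m))"
    using r_car d by simp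
  show "Ind \<one> $$ (I,J) = 1\<^sub>m (t*m) $$ (I,J)"
  proof (cases "I div m = J div m")
    case True
    then have "r (I div m) \<otimes> \<one> \<otimes> inv (r (J div m)) = \<one>" using r_car d by simp
    then have "Ind \<one> $$ (I,J) = \<sigma> \<one> $$ (I mod m, J mod m)"
      using Ind_index[OF IJ] subgroup.one_closed[OF As] unfolding blk_def by simp
    also have "\<dots> = (if I mod m = J mod m then 1 else 0)" using sig_one d by simp
    also have "\<dots> = (if I = J then 1 else 0)" using True by (metis div_mult_mod_eq)
    finally show ?thesis using IJ by simp
  next
    case False
    then have "r (I div m) \<otimes> \<one> \<otimes> inv (r (J div m)) \<notin> A" using e r_inj_A d by simp
    then have "Ind \<one> $$ (I,J) = 0" using Ind_index[OF IJ] d unfolding blk_def by simp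
    moreover have "I \<noteq> J" using False by auto
    ultimately show ?thesis using IJ by simp
  qed
qed

lemma Ind_inv: "x \<in> carrier H \<Longrightarrow> Ind (inv x) * Ind x = 1\<^sub>m (t*m)"
  using Ind_mult[of "inv x" x] Ind_one by simp

lemma Ind_kernel:
  assumes x: "x \<in> carrier H" and e: "Ind x = 1\<^sub>m (t*m)" and m: "0 < m" and i: "i < t"
  shows "r i \<otimes> x \<otimes> inv (r i) \<in> A \<and> \<sigma> (r i \<otimes> x \<otimes> inv (r i)) = 1\<^sub>m m"
proof -
  let ?a = "r i \<otimes> x \<otimes> inv (r i)"
  have ent: "blk ?a $$ (p,q) = (if p = q then 1 else 0)" if pq: "p < m" "q < m" for p q
  proof -
    have lt: "i*m + p < t*m" "i*m + q < t*m"
    proof -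
      have "i*m + p < (i+1)*m" "i*m + q < (i+1)*m" using pq by auto
      moreover have "(i+1)*m \<le> t*m" using i by (intro mult_right_mono) auto
      ultimately show "i*m + p < t*m" "i*m + q < t*m" by auto
    qed
    have "Ind x $$ (i*m+p, i*m+q) = blk ?a $$ (p,q)" using Ind_index[OF lt] pq by simp
    then show ?thesis using e lt pq by simp
  qed
  have inA: "?a \<in> A"
  proof (rule ccontr)
    assume "?a \<notin> A"
    then have "blk ?a $$ (0,0) = 0" unfolding blk_def using m by simp
    then show False using ent[of 0 0] m by simp
  qed
  have "\<sigma> ?a = 1\<^sub>m m"
  proof (rule eq_matI)
    show "dim_row (\<sigma> ?a) = dim_row (1\<^sub>m m)" "dim_col (\<sigma> ?a) = dim_col (1\<^sub>m m)" using sig[OF inA] by auto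
    fix p q assume "p < dim_row (1\<^sub>m m)" "q < dim_col (1\<^sub>m m)"
    then show "\<sigma> ?a $$ (p,q) = 1\<^sub>m m $$ (p,q)" using ent[of p q] inA unfolding blk_def by simp
  qed
  then show ?thesis using inA by simp
qed

end





lemma pdiv: fixes p d k :: nat
  assumes "Factorial_Ring.prime p" "d dvd p ^ k" "d \<noteq> 1" shows "p dvd d"
proof -
  obtain i where "i \<le> k" "d = p ^ i" using divides_primepow_nat[OF assms(1)] assms(2) by auto
  moreover have "i \<noteq> 0" using assms(3) calculation by auto
  ultimately show ?thesis by (simp add: dvd_power)
qed

lemma (in group) pgroup_normal_center:
  assumes fin: "finite (carrier G)" and p: "Factorial_Ring.prime p" and ord: "card (carrier G) = p ^ k"
    and N: "subgroup N G" and nor: "\<And>g x. g \<in> carrier G \<Longrightarrow> x \<in> N \<Longrightarrow> g \<otimes> x \<otimes> inv g \<in> N"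
    and cen: "N \<inter> group_center G = {\<one>}"
  shows "N = {\<one>}"
proof (rule ccontr)
  assume ne: "N \<noteq> {\<one>}"
  define \<phi> where "\<phi> = (\<lambda>g. (\<lambda>h \<in> carrier G. g \<otimes> h \<otimes> (inv g)))"
  interpret act: group_action G "carrier G" \<phi> unfolding \<phi>_def by (rule action_by_conjugation)
  have Nc: "\<And>x. x \<in> N \<Longrightarrow> x \<in> carrier G" using subgroup.mem_carrier[OF N] .
  have orb: "orbit G \<phi> x = {g \<otimes> x \<otimes> inv g | g. g \<in> carrier G}" if "x \<in> carrier G" for x
    unfolding orbit_def \<phi>_def using that by auto
  have orbN: "orbit G \<phi> x \<subseteq> N" if "x \<in> N" for x
    using orb[OF Nc[OF that]] nor that by auto
  have orbdvd: "card (orbit G \<phi> x) dvd p ^ k" if "x \<in> carrier G" for x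
  proof -
    have "card (orbit G \<phi> x) * card (stabilizer G \<phi> x) = p ^ k"
      using act.orbit_stabilizer_theorem[OF that] ord unfolding order_def by simp
    then show ?thesis using dvd_triv_left[of "card (orbit G \<phi> x)" "card (stabilizer G \<phi> x)"] by simp
  qed
  have one_orb: "orbit G \<phi> \<one> = {\<one>}"
  proof -
    have "{g \<otimes> \<one> \<otimes> inv g | g. g \<in> carrier G} = {\<one>}"
    proof (intro equalityI subsetI)
      fix y assume "y \<in> {g \<otimes> \<one> \<otimes> inv g | g. g \<in> carrier G}"
      then obtain g where "g \<in> carrier G" "y = g \<otimes> \<one> \<otimes> inv g" by blast
      then show "y \<in> {\<one>}" by simp
    next
      fix y assume "y \<in> {\<one>}"
      then have "y = \<one> \<otimes> \<one> \<otimes> inv \<one>" by simp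
      then show "y \<in> {g \<otimes> \<one> \<otimes> inv g | g. g \<in> carrier G}" using one_closed by blast
    qed
    then show ?thesis using orb[OF one_closed] by simp
  qed
  have big: "p dvd card (orbit G \<phi> x)" if x: "x \<in> N" "x \<noteq> \<one>" for x
  proof -
    have "x \<notin> group_center G" using cen x by auto
    then obtain g where g: "g \<in> carrier G" "x \<otimes> g \<noteq> g \<otimes> x" using Nc[OF x(1)] unfolding group_center_def by auto
    have xc: "x \<in> carrier G" using Nc[OF x(1)] .
    have "g \<otimes> x \<otimes> inv g \<noteq> x"
    proof
      assume "g \<otimes> x \<otimes> inv g = x"
      then have "g \<otimes> x \<otimes> inv g \<otimes> g = x \<otimes> g" by simp
      then show False using g xc by (simp add: m_assoc)
    qed
    moreover have "g \<otimes> x \<otimes> inv g \<in> orbit G \<phi> x" "x \<in> orbit G \<phi> x" using orb[OF xc] g(1) act.orbit_refl[OF xc] by auto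
    moreover have "finite (orbit G \<phi> x)"
      using finite_subset[OF orbN[OF x(1)] finite_subset[OF subgroup.subset[OF N] fin]] .
    ultimately have "card {x, g \<otimes> x \<otimes> inv g} \<le> card (orbit G \<phi> x)"
      by (intro card_mono) auto
    then have "card (orbit G \<phi> x) \<noteq> 1" using \<open>g \<otimes> x \<otimes> inv g \<noteq> x\<close> by auto
    then show ?thesis using pdiv[OF p orbdvd[OF xc]] by simp
  qed
  define Orbs where "Orbs = (\<lambda>x. orbit G \<phi> x) ` N"
  have finN: "finite N" using finite_subset[OF subgroup.subset[OF N] fin] .
  have finO: "finite Orbs" unfolding Orbs_def using finN by simp
  have UO: "\<Union>Orbs = N"
  proof
    show "\<Union>Orbs \<subseteq> N" unfolding Orbs_def using orbN by auto
    show "N \<subseteq> \<Union>Orbs"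
    proof
      fix x assume x: "x \<in> N"
      have "x \<in> orbit G \<phi> x" using act.orbit_refl[OF Nc[OF x]] .
      moreover have "orbit G \<phi> x \<in> Orbs" unfolding Orbs_def using x by (rule imageI)
      ultimately show "x \<in> \<Union>Orbs" by (rule UnionI[rotated])
    qed
  qed
  have disj: "pairwise disjnt Orbs"
  proof (unfold pairwise_def disjnt_def, intro ballI impI)
    fix A B assume A: "A \<in> Orbs" and B: "B \<in> Orbs" and AB: "A \<noteq> B"
    have "A \<in> orbits G (carrier G) \<phi>" "B \<in> orbits G (carrier G) \<phi>"
      using A B Nc unfolding Orbs_def orbits_def by auto
    then show "A \<inter> B = {}" using act.disjoint_union[of A B] AB by auto
  qed
  have finB: "finite B" if B: "B \<in> Orbs" for B
  proof -
    from B obtain x where "x \<in> N" "B = orbit G \<phi> x" unfolding Orbs_def by auto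
    then show ?thesis using finite_subset[OF orbN finN] by simp
  qed
  have cardN: "card N = (\<Sum>B\<in>Orbs. card B)"
    using card_Union_disjoint[OF disj finB] UO by simp
  have oneO: "{\<one>} \<in> Orbs" unfolding Orbs_def using image_eqI[where f="\<lambda>x. orbit G \<phi> x", OF one_orb[symmetric] subgroup.one_closed[OF N]] .
  have "card N = card {\<one>} + (\<Sum>B\<in>Orbs - {{\<one>}}. card B)"
    using cardN sum.remove[OF finO oneO, of card] by simp
  moreover have "p dvd (\<Sum>B\<in>Orbs - {{\<one>}}. card B)"
  proof (rule dvd_sum)
    fix B assume "B \<in> Orbs - {{\<one>}}"
    then obtain x where x: "x \<in> N" "B = orbit G \<phi> x" "B \<noteq> {\<one>}" unfolding Orbs_def by auto
    then have "x \<noteq> \<one>" using one_orb by auto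
    then show "p dvd card B" using big x by simp
  qed
  moreover have "p dvd card N"
  proof -
    have "card (rcosets N) * card N = p ^ k" using lagrange[OF N] ord unfolding order_def by simp
    then have "card N dvd p ^ k" using dvd_triv_right[of "card N" "card (rcosets N)"] by simp
    moreover have "card N \<noteq> 1"
    proof
      assume "card N = 1"
      then obtain y where "N = {y}" by (rule card_1_singletonE)
      then show False using ne subgroup.one_closed[OF N] by auto
    qed
    ultimately show ?thesis by (rule pdiv[OF p])
  qed
  ultimately have "p dvd card {\<one>} + (\<Sum>B\<in>Orbs - {{\<one>}}. card B)" "p dvd (\<Sum>B\<in>Orbs - {{\<one>}}. card B)" by simp_all
  then have "p dvd card {\<one>}" using dvd_add_left_iff by blast
  then have "p dvd 1" by simp
  then show False using p by simp
qed




lemma (in group) center_subgroup: "subgroup (group_center G) G"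
proof (rule subgroupI)
  show "group_center G \<subseteq> carrier G" unfolding group_center_def by auto
  show "group_center G \<noteq> {}" unfolding group_center_def using one_closed by auto
next
  fix z assume z: "z \<in> group_center G"
  then have zc: "z \<in> carrier G" and zg: "\<And>g. g \<in> carrier G \<Longrightarrow> z \<otimes> g = g \<otimes> z"
    unfolding group_center_def by auto
  have "inv z \<otimes> g = g \<otimes> inv z" if g: "g \<in> carrier G" for g
  proof -
    have "inv z \<otimes> g = inv z \<otimes> (g \<otimes> z) \<otimes> inv z" using zc g by (simp add: m_assoc)
    also have "\<dots> = inv z \<otimes> (z \<otimes> g) \<otimes> inv z" using zg[OF g] by simp
    also have "\<dots> = g \<otimes> inv z" using zc g by (simp add: m_assoc[symmetric])
    finally show ?thesis .
  qed
  then show "inv z \<in> group_center G" using zc unfolding group_center_def by simp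
next
  fix z w assume "z \<in> group_center G" "w \<in> group_center G"
  then have zc: "z \<in> carrier G" "w \<in> carrier G" and zg: "\<And>g. g \<in> carrier G \<Longrightarrow> z \<otimes> g = g \<otimes> z"
    and wg: "\<And>g. g \<in> carrier G \<Longrightarrow> w \<otimes> g = g \<otimes> w"
    unfolding group_center_def by auto
  have "z \<otimes> w \<otimes> g = g \<otimes> (z \<otimes> w)" if g: "g \<in> carrier G" for g
  proof -
    have "z \<otimes> w \<otimes> g = z \<otimes> (g \<otimes> w)" using zc g wg[OF g] by (simp add: m_assoc)
    also have "\<dots> = (g \<otimes> z) \<otimes> w" using zc g zg[OF g] by (simp add: m_assoc[symmetric])
    also have "\<dots> = g \<otimes> (z \<otimes> w)" using zc g by (simp add: m_assoc)
    finally show ?thesis .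
  qed
  then show "z \<otimes> w \<in> group_center G" using zc unfolding group_center_def by simp
qed

lemma (in group) center_in_maxab:
  assumes fin: "finite (carrier G)" and A: "maximal_abelian_subgroup A G"
  shows "group_center G \<subseteq> A"
proof -
  have As: "subgroup A G" and Ac: "comm_group (G\<lparr>carrier := A\<rparr>)"
    and mx: "\<And>B. subgroup B G \<Longrightarrow> comm_group (G\<lparr>carrier := B\<rparr>) \<Longrightarrow> A \<subseteq> B \<Longrightarrow> B = A"
    using A unfolding maximal_abelian_subgroup_def by auto
  have Acar: "\<And>a. a \<in> A \<Longrightarrow> a \<in> carrier G" using subgroup.mem_carrier[OF As] .
  have Acomm: "a \<otimes> b = b \<otimes> a" if "a \<in> A" "b \<in> A" for a b
    using comm_monoid.m_comm[OF comm_group.axioms(1)[OF Ac], of a b] that by simp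
  let ?Z = "group_center G"
  have Zc: "\<And>z. z \<in> ?Z \<Longrightarrow> z \<in> carrier G" unfolding group_center_def by auto
  have Zg: "\<And>z g. z \<in> ?Z \<Longrightarrow> g \<in> carrier G \<Longrightarrow> z \<otimes> g = g \<otimes> z" unfolding group_center_def by auto
  define B where "B = {a \<otimes> z | a z. a \<in> A \<and> z \<in> ?Z}"
  have Bc: "B \<subseteq> carrier G" unfolding B_def using Acar Zc by auto
  have AB: "A \<subseteq> B"
  proof
    fix a assume a: "a \<in> A"
    have "a = a \<otimes> \<one>" using Acar[OF a] by simp
    moreover have "\<one> \<in> ?Z" using subgroup.one_closed[OF center_subgroup] .
    ultimately show "a \<in> B" unfolding B_def using a by blast
  qed
  have mulB: "(a \<otimes> z) \<otimes> (a' \<otimes> z') = (a \<otimes> a') \<otimes> (z \<otimes> z')"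
    if "a \<in> A" "z \<in> ?Z" "a' \<in> A" "z' \<in> ?Z" for a z a' z'
  proof -
    have "(a \<otimes> z) \<otimes> (a' \<otimes> z') = a \<otimes> (z \<otimes> a') \<otimes> z'" using that Acar Zc by (simp add: m_assoc)
    also have "\<dots> = a \<otimes> (a' \<otimes> z) \<otimes> z'" using Zg[OF that(2) Acar[OF that(3)]] by simp
    also have "\<dots> = (a \<otimes> a') \<otimes> (z \<otimes> z')" using that Acar Zc by (simp add: m_assoc)
    finally show ?thesis .
  qed
  have sB: "subgroup B G"
  proof (rule finite_closed_subgroup[OF fin Bc])
    show "B \<noteq> {}" using AB subgroup.one_closed[OF As] by auto
    fix x y assume "x \<in> B" "y \<in> B"
    then obtain a z a' z' where "a \<in> A" "z \<in> ?Z" "x = a \<otimes> z" "a' \<in> A" "z' \<in> ?Z" "y = a' \<otimes> z'"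
      unfolding B_def by auto
    moreover have "a \<otimes> a' \<in> A" using subgroup.m_closed[OF As] calculation by simp
    moreover have "z \<otimes> z' \<in> ?Z" using subgroup.m_closed[OF center_subgroup] calculation by simp
    ultimately show "x \<otimes> y \<in> B" unfolding B_def using mulB by auto
  qed
  have cB: "comm_group (G\<lparr>carrier := B\<rparr>)"
  proof (rule group.group_comm_groupI[OF subgroup.subgroup_is_group[OF sB is_group]])
    fix x y assume "x \<in> carrier (G\<lparr>carrier := B\<rparr>)" "y \<in> carrier (G\<lparr>carrier := B\<rparr>)"
    then obtain a z a' z' where h: "a \<in> A" "z \<in> ?Z" "x = a \<otimes> z" "a' \<in> A" "z' \<in> ?Z" "y = a' \<otimes> z'"
      unfolding B_def by auto
    have "x \<otimes> y = (a \<otimes> a') \<otimes> (z \<otimes> z')" using mulB h by simp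
    also have "\<dots> = (a' \<otimes> a) \<otimes> (z' \<otimes> z)" using Acomm[OF h(1) h(4)] Zg[OF h(2) Zc[OF h(5)]] by simp
    also have "\<dots> = y \<otimes> x" using mulB h by simp
    finally show "x \<otimes>\<^bsub>G\<lparr>carrier := B\<rparr>\<^esub> y = y \<otimes>\<^bsub>G\<lparr>carrier := B\<rparr>\<^esub> x" by simp
  qed
  have "B = A" using mx[OF sB cB AB] .
  moreover have "?Z \<subseteq> B"
  proof
    fix z assume z: "z \<in> ?Z"
    have "z = \<one> \<otimes> z" using Zc[OF z] by simp
    then show "z \<in> B" unfolding B_def using z subgroup.one_closed[OF As] by blast
  qed
  ultimately show ?thesis by simp
qed

lemma (in induce) Ind_inj:
  assumes "\<And>x. x \<in> carrier H \<Longrightarrow> Ind x = 1\<^sub>m (t*m) \<Longrightarrow> x = \<one>"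
  shows "inj_on Ind (carrier H)"
proof (rule inj_onI)
  fix x y assume x: "x \<in> carrier H" and y: "y \<in> carrier H" and e: "Ind x = Ind y"
  have "Ind (x \<otimes> inv y) = Ind x * Ind (inv y)" using Ind_mult[of x "inv y"] x y by simp
  also have "\<dots> = Ind y * Ind (inv y)" using e by simp
  also have "\<dots> = Ind \<one>" using Ind_mult[of y "inv y"] y by simp
  also have "\<dots> = 1\<^sub>m (t*m)" using Ind_one by simp
  finally have "x \<otimes> inv y = \<one>" using assms x y by simp
  moreover have "x = x \<otimes> inv y \<otimes> y" using x y by (simp add: m_assoc)
  ultimately show "x = y" using y by simp
qed

lemma (in induce) t_pos: "0 < t"
proof -
  have "A #> \<one> \<in> rcosets A" unfolding RCOSETS_def by auto
  then show ?thesis using fin_rc card_gt_0_iff by auto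
qed

lemma (in group) exists_faithful:
  assumes fin: "finite (carrier G)" shows "\<exists>n \<rho>. faithful_rep G n \<rho>"
proof -
  interpret I: induce G "{\<one>}" "\<lambda>_. 1\<^sub>m 1" 1
    by unfold_locales (auto simp: fin triv_subgroup)
  have ker: "x = \<one>" if x: "x \<in> carrier G" "I.Ind x = 1\<^sub>m (I.t * 1)" for x
  proof -
    have "I.r 0 \<otimes> x \<otimes> inv (I.r 0) \<in> {\<one>}" using I.Ind_kernel[OF x, of 0] I.t_pos by simp
    then have e: "I.r 0 \<otimes> x \<otimes> inv (I.r 0) = \<one>" by simp
    have r0: "I.r 0 \<in> carrier G" using I.r_car I.t_pos by simp
    have "I.r 0 \<otimes> x = I.r 0" using e r0 x by (metis inv_solve_right' m_closed l_one one_closed)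
    then show ?thesis using r0 x by simp
  qed
  have "faithful_rep G (I.t * 1) I.Ind"
    unfolding faithful_rep_def
    using I.Ind_carrier I.Ind_mult I.Ind_one I.Ind_inj ker by auto
  then show ?thesis by blast
qed


lemma m_faithful_le: "faithful_rep G n \<rho> \<Longrightarrow> m_faithful G \<le> n"
  unfolding m_faithful_def by (rule Least_le) blast

lemma m_faithful_ex: assumes "group G" "finite (carrier G)" shows "\<exists>\<rho>. faithful_rep G (m_faithful G) \<rho>"
proof -
  have "\<exists>n. Ex (faithful_rep G n)" using group.exists_faithful[OF assms] by blast
  then show ?thesis unfolding m_faithful_def by (rule LeastI_ex)
qed

lemma (in group) main_lemma:
  assumes p: "Factorial_Ring.prime p" and ord: "card (carrier G) = p ^ k"
    and mA: "maximal_abelian_subgroup A G"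
  shows "m_faithful G \<le> m_faithful (G\<lparr>carrier := group_center G\<rparr>) * card (rcosets A)"
proof -
  have p0: "0 < p" using p prime_gt_0_nat by blast
  have fin: "finite (carrier G)"
  proof (rule ccontr)
    assume "infinite (carrier G)" then have "card (carrier G) = 0" by simp
    then show False using ord p0 by simp
  qed
  let ?Z = "group_center G"
  let ?Zg = "G\<lparr>carrier := ?Z\<rparr>"
  let ?Ag = "G\<lparr>carrier := A\<rparr>"
  have Zs: "subgroup ?Z G" by (rule center_subgroup)
  have As: "subgroup A G" and Acg: "comm_group ?Ag" using mA unfolding maximal_abelian_subgroup_def by auto
  have ZA: "?Z \<subseteq> A" using center_in_maxab[OF fin mA] .
  have Zgrp: "group ?Zg" using subgroup.subgroup_is_group[OF Zs is_group] .
  have finZ: "finite ?Z" using finite_subset[OF subgroup.subset[OF Zs] fin] .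
  define mZ where "mZ = m_faithful ?Zg"
  obtain \<rho> where rho: "faithful_rep ?Zg mZ \<rho>" using m_faithful_ex[OF Zgrp] finZ unfolding mZ_def by auto
  have rho_car: "\<And>z. z \<in> ?Z \<Longrightarrow> \<rho> z \<in> carrier_mat mZ mZ"
    and rho_mult: "\<And>x y. x \<in> ?Z \<Longrightarrow> y \<in> ?Z \<Longrightarrow> \<rho> (x \<otimes> y) = \<rho> x * \<rho> y"
    and rho_one: "\<rho> \<one> = 1\<^sub>m mZ" and rho_inj: "inj_on \<rho> ?Z"
    using rho unfolding faithful_rep_def by auto
  have finA: "finite A" using finite_subset[OF subgroup.subset[OF As] fin] .
  have ZsA: "subgroup ?Z ?Ag" using subgroup_incl[OF Zs As ZA] .
  have "fourier ?Ag ?Z \<rho> mZ"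
    by (intro fourier.intro[OF Acg] fourier_axioms.intro) (use finA ZsA rho_car rho_mult rho_one in simp_all)
  then interpret F: fourier ?Ag ?Z \<rho> mZ .
  have "induce G A F.sigma mZ"
    by (intro induce.intro induce_axioms.intro is_group fin As)
       (use F.sigma_carrier F.sigma_mult F.sigma_one in simp_all)
  then interpret I: induce G A F.sigma mZ .
  have Zc: "\<And>z. z \<in> ?Z \<Longrightarrow> z \<in> carrier G" using subgroup.mem_carrier[OF Zs] .
  define N where "N = {x \<in> carrier G. I.Ind x = 1\<^sub>m (I.t * mZ)}"
  have Ncar: "N \<subseteq> carrier G" unfolding N_def by auto
  have oneN: "\<one> \<in> N" unfolding N_def using I.Ind_one by simp
  have Nmul: "x \<otimes> y \<in> N" if "x \<in> N" "y \<in> N" for x y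
    using that I.Ind_mult[of x y] unfolding N_def by simp
  have sN: "subgroup N G"
    using finite_closed_subgroup[OF fin Ncar] oneN Nmul by auto
  have nor: "g \<otimes> x \<otimes> inv g \<in> N" if g: "g \<in> carrier G" and x: "x \<in> N" for g x
  proof -
    have xc: "x \<in> carrier G" and ex: "I.Ind x = 1\<^sub>m (I.t * mZ)" using x unfolding N_def by auto
    have "I.Ind (g \<otimes> x \<otimes> inv g) = I.Ind g * I.Ind x * I.Ind (inv g)"
      using I.Ind_mult[of "g \<otimes> x" "inv g"] I.Ind_mult[of g x] g xc by simp
    also have "\<dots> = I.Ind g * I.Ind (inv g)" using ex right_mult_one_mat[OF I.Ind_carrier] by simp
    also have "\<dots> = I.Ind \<one>" using I.Ind_mult[of g "inv g"] g by simp
    also have "\<dots> = 1\<^sub>m (I.t * mZ)" using I.Ind_one .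
    finally show ?thesis unfolding N_def using g xc by simp
  qed
  have cen: "N \<inter> ?Z = {\<one>}"
  proof
    show "{\<one>} \<subseteq> N \<inter> ?Z" using oneN subgroup.one_closed[OF Zs] by simp
    show "N \<inter> ?Z \<subseteq> {\<one>}"
    proof
      fix z assume z: "z \<in> N \<inter> ?Z"
      then have zZ: "z \<in> ?Z" and zc: "z \<in> carrier G" and ez: "I.Ind z = 1\<^sub>m (I.t * mZ)"
        unfolding N_def by auto
      have oZ: "\<one> \<in> ?Z" using subgroup.one_closed[OF Zs] .
      have "\<rho> z = \<rho> \<one>"
      proof (cases "mZ = 0")
        case True
        then show ?thesis using rho_car[OF zZ] rho_car[OF oZ] by (intro eq_matI) auto
      next
        case False
        then have m0: "0 < mZ" by simp
        have r0: "I.r 0 \<in> carrier G" using I.r_car I.t_pos by simp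
        have kk: "I.r 0 \<otimes> z \<otimes> inv (I.r 0) \<in> A \<and> F.sigma (I.r 0 \<otimes> z \<otimes> inv (I.r 0)) = 1\<^sub>m mZ"
          using I.Ind_kernel[OF zc ez m0 I.t_pos] .
        have "z \<otimes> I.r 0 = I.r 0 \<otimes> z" using zZ r0 unfolding group_center_def by auto
        then have "I.r 0 \<otimes> z \<otimes> inv (I.r 0) = z \<otimes> I.r 0 \<otimes> inv (I.r 0)" by simp
        also have "\<dots> = z" using r0 zc by (simp add: m_assoc)
        finally have "I.r 0 \<otimes> z \<otimes> inv (I.r 0) = z" .
        then have "F.sigma z = 1\<^sub>m mZ" using kk by simp
        then show ?thesis using F.sigma_Z[OF zZ] rho_one by simp
      qed
      then show "z \<in> {\<one>}" using inj_onD[OF rho_inj _ zZ oZ] by simp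
    qed
  qed
  have "N = {\<one>}" using pgroup_normal_center[OF fin p ord sN nor cen] .
  then have "inj_on I.Ind (carrier G)" using I.Ind_inj unfolding N_def by blast
  then have "faithful_rep G (I.t * mZ) I.Ind"
    unfolding faithful_rep_def using I.Ind_carrier I.Ind_mult I.Ind_one by auto
  then have "m_faithful G \<le> I.t * mZ" by (rule m_faithful_le)
  then show ?thesis unfolding mZ_def by (simp add: mult.commute)
qed


theorem corollary3p6:
  fixes H :: "('a, 'b) monoid_scheme" and p k :: nat and A :: "'a set"
  assumes "group H"
    and "Factorial_Ring.prime p"
    and "card (carrier H) = p ^ k"
    and "maximal_abelian_subgroup A H"
  shows "m_faithful H \<le> m_faithful (H\<lparr>carrier := group_center H\<rparr>) * card (rcosets\<^bsub>H\<^esub> A)"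
  using group.main_lemma[OF assms(1) assms(2) assms(3) assms(4)] .


end
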